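(* Let $\mathcal{C}$ be a covering of a finite set $E$ such that the distinct indiscernible neighborhoods $I(x_1),\dots,I(x_s)$ form a partition of $E$, and let $M(E,\mathcal{I}_{SH}(\mathcal{C}))$ be the matroid whose closure operator is $SH$. Then: (1) $X$ is a base of this matroid if and only if $|X\cap I(x_i)|=1$ for all $i\in\{1,\dots,s\}$; moreover the matroid has exactly $|I(x_1)||I(x_2)|\cdots|I(x_s)|$ bases. (2) For all $X\subseteq E$, its rank is $r_{SH}(X)=|\{I(x_i):I(x_i)\cap X\neq\emptyset,\ i=1,\dots,s\}|$. (3) $X$ is dependent if and only if there exists $i$ with $|I(x_i)\cap X|>1$. (4) $X$ is a circuit if and only if there exists $i$ with $X\subseteq I(x_i)$ and $|X|=2$.
   Context: A covering of $E$ is a family of nonempty subsets of $E$ with union $E$. $I(x)=\bigcup\{K\in\mathcal{C}:x\in K\}$ and $SH(X)=\bigcup\{K\in\mathcal{C}:K\cap X\neq\emptyset\}$. Under the partition hypothesis $SH$ is the closure operator of a matroid on $E$ with independent sets $\mathcal{I}_{SH}(\mathcal{C})=\{I\subseteq E:x\notin SH(I-\{x\})\ \forall x\in I\}$. A base is a maximal independent set, a circuit a minimal dependent set, and the rank of $X$ is the maximum size of an independent subset of $X$. *)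

theory Defs
  imports Main
begin

definition covering :: "'a set \<Rightarrow> 'a set set \<Rightarrow> bool" where
  "covering E C \<longleftrightarrow> (\<forall>K\<in>C. K \<noteq> {} \<and> K \<subseteq> E) \<and> \<Union>C = E"

definition indisc :: "'a set set \<Rightarrow> 'a \<Rightarrow> 'a set" where
  "indisc C x = \<Union>{K\<in>C. x \<in> K}"

definition SH :: "'a set set \<Rightarrow> 'a set \<Rightarrow> 'a set" where
  "SH C X = \<Union>{K\<in>C. K \<inter> X \<noteq> {}}"

definition partition_hyp :: "'a set \<Rightarrow> 'a set set \<Rightarrow> bool" where
  "partition_hyp E C \<longleftrightarrow>
     (\<forall>x\<in>E. \<forall>y\<in>E. indisc C x = indisc C y \<or> indisc C x \<inter> indisc C y = {})
     \<and> (\<forall>x\<in>E. indisc C x \<noteq> {}) \<and> \<Union>(indisc C ` E) = E"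

definition indep_SH :: "'a set \<Rightarrow> 'a set set \<Rightarrow> 'a set \<Rightarrow> bool" where
  "indep_SH E C I \<longleftrightarrow> I \<subseteq> E \<and> (\<forall>x\<in>I. x \<notin> SH C (I - {x}))"

definition base_SH :: "'a set \<Rightarrow> 'a set set \<Rightarrow> 'a set \<Rightarrow> bool" where
  "base_SH E C B \<longleftrightarrow> indep_SH E C B \<and> (\<forall>Y. indep_SH E C Y \<and> B \<subseteq> Y \<longrightarrow> Y = B)"

definition dep_SH :: "'a set \<Rightarrow> 'a set set \<Rightarrow> 'a set \<Rightarrow> bool" where
  "dep_SH E C X \<longleftrightarrow> X \<subseteq> E \<and> \<not> indep_SH E C X"

definition circuit_SH :: "'a set \<Rightarrow> 'a set set \<Rightarrow> 'a set \<Rightarrow> bool" where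
  "circuit_SH E C X \<longleftrightarrow> dep_SH E C X \<and> (\<forall>Y. Y \<subset> X \<longrightarrow> \<not> dep_SH E C Y)"

definition rank_SH :: "'a set \<Rightarrow> 'a set set \<Rightarrow> 'a set \<Rightarrow> nat" where
  "rank_SH E C X = Max {card Y | Y. Y \<subseteq> X \<and> indep_SH E C Y}"

end

theory Submission imports Defs "HOL-Library.FuncSet" begin

lemma self_in: assumes "covering E C" "x \<in> E" shows "x \<in> indisc C x"
  using assms unfolding covering_def indisc_def by auto

lemma ind_sub: assumes "covering E C" shows "indisc C x \<subseteq> E"
  using assms unfolding covering_def indisc_def by auto

lemma mem_iff: assumes "covering E C" "partition_hyp E C" "x \<in> E" "y \<in> E"
  shows "y \<in> indisc C x \<longleftrightarrow> indisc C x = indisc C y"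
  using assms self_in[OF assms(1)] unfolding partition_hyp_def by blast

lemma SH_eq: "SH C X = \<Union>(indisc C ` X)"
  unfolding SH_def indisc_def by auto

lemma indep_iff: assumes "covering E C" "partition_hyp E C" "I \<subseteq> E"
  shows "indep_SH E C I \<longleftrightarrow> (\<forall>x\<in>I. \<forall>y\<in>I. indisc C x = indisc C y \<longrightarrow> x = y)"
proof -
  have "x \<in> SH C (I - {x}) \<longleftrightarrow> (\<exists>y\<in>I. y \<noteq> x \<and> indisc C x = indisc C y)" if "x \<in> I" for x
    using mem_iff[OF assms(1,2)] assms(3) that unfolding SH_eq by blast
  then show ?thesis unfolding indep_SH_def using assms(3) by metis
qed

lemma blocks_disj: assumes "partition_hyp E C" "N \<in> indisc C ` E" "M \<in> indisc C ` E"
  shows "N = M \<or> N \<inter> M = {}"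
proof -
  obtain x y where "x \<in> E" "y \<in> E" "N = indisc C x" "M = indisc C y" using assms(2,3) by blast
  then show ?thesis using assms(1) unfolding partition_hyp_def by simp
qed

lemma in_block: assumes "covering E C" "partition_hyp E C" "x \<in> E" "N \<in> indisc C ` E"
  shows "x \<in> N \<longleftrightarrow> N = indisc C x"
proof -
  obtain z where z: "z \<in> E" "N = indisc C z" using assms(4) by blast
  show ?thesis using mem_iff[OF assms(1,2) z(1) assms(3)] z by simp
qed

lemma block_ne: assumes "covering E C" "N \<in> indisc C ` E" obtains z where "z \<in> E" "N = indisc C z" "z \<in> N"
proof -
  obtain z where "z \<in> E" "N = indisc C z" using assms(2) by blast
  then show ?thesis using that self_in[OF assms(1)] by simp
qed

lemma indep_iff2: assumes "covering E C" "partition_hyp E C" "I \<subseteq> E"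
  shows "indep_SH E C I \<longleftrightarrow> (\<forall>N\<in>indisc C ` E. \<forall>x\<in>I\<inter>N. \<forall>y\<in>I\<inter>N. x = y)"
proof -
  have "(\<forall>x\<in>I. \<forall>y\<in>I. indisc C x = indisc C y \<longrightarrow> x = y) \<longleftrightarrow> (\<forall>N\<in>indisc C ` E. \<forall>x\<in>I\<inter>N. \<forall>y\<in>I\<inter>N. x = y)"
  proof
    assume H: "\<forall>x\<in>I. \<forall>y\<in>I. indisc C x = indisc C y \<longrightarrow> x = y"
    show "\<forall>N\<in>indisc C ` E. \<forall>x\<in>I\<inter>N. \<forall>y\<in>I\<inter>N. x = y"
    proof (intro ballI)
      fix N x y assume N: "N \<in> indisc C ` E" and x: "x \<in> I\<inter>N" and y: "y \<in> I\<inter>N"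
      have "N = indisc C x" using in_block[OF assms(1,2) _ N] x assms(3) by blast
      moreover have "N = indisc C y" using in_block[OF assms(1,2) _ N] y assms(3) by blast
      ultimately show "x = y" using H x y by auto
    qed
  next
    assume H: "\<forall>N\<in>indisc C ` E. \<forall>x\<in>I\<inter>N. \<forall>y\<in>I\<inter>N. x = y"
    show "\<forall>x\<in>I. \<forall>y\<in>I. indisc C x = indisc C y \<longrightarrow> x = y"
    proof (intro ballI impI)
      fix x y assume x: "x \<in> I" and y: "y \<in> I" and e: "indisc C x = indisc C y"
      have "x \<in> indisc C x" "y \<in> indisc C x" using self_in[OF assms(1)] x y e assms(3) by auto
      then show "x = y" using H x y assms(3) by blast
    qed
  qed
  then show ?thesis using indep_iff[OF assms] by simp
qed

lemma indep_card: assumes "covering E C" "partition_hyp E C" "I \<subseteq> E" "finite E"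
  shows "indep_SH E C I \<longleftrightarrow> (\<forall>N\<in>indisc C ` E. card (I \<inter> N) \<le> 1)"
proof -
  have "finite (I \<inter> N)" for N using assms(3,4) finite_subset by blast
  then show ?thesis unfolding indep_iff2[OF assms(1-3)] by (simp add: card_le_Suc0_iff_eq)
qed

lemma base_char: assumes "covering E C" "partition_hyp E C" "X \<subseteq> E" "finite E"
  shows "base_SH E C X \<longleftrightarrow> (\<forall>N\<in>indisc C ` E. card (X \<inter> N) = 1)"
proof
  assume b: "base_SH E C X"
  hence ind: "indep_SH E C X" unfolding base_SH_def by simp
  hence le: "\<forall>N\<in>indisc C ` E. card (X \<inter> N) \<le> 1" using indep_card[OF assms(1-3,4)] by simp
  show "\<forall>N\<in>indisc C ` E. card (X \<inter> N) = 1"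
  proof
    fix N assume N: "N \<in> indisc C ` E"
    have "X \<inter> N \<noteq> {}"
    proof
      assume em: "X \<inter> N = {}"
      obtain z where z: "z \<in> E" "N = indisc C z" "z \<in> N" using block_ne[OF assms(1) N] by blast
      have zX: "z \<notin> X" using em z by blast
      have YE: "insert z X \<subseteq> E" using z assms(3) by auto
      have "indep_SH E C (insert z X)"
        unfolding indep_iff2[OF assms(1,2) YE]
      proof (intro ballI)
        fix M x y assume M: "M \<in> indisc C ` E" and x: "x \<in> insert z X \<inter> M" and y: "y \<in> insert z X \<inter> M"
        show "x = y"
        proof (cases "M = N")
          case True then show ?thesis using x y em by auto
        next
          case False
          then have "z \<notin> M" using blocks_disj[OF assms(2) M N] z by auto
          then have "x \<in> X \<inter> M" "y \<in> X \<inter> M" using x y by auto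
          then show ?thesis using ind unfolding indep_iff2[OF assms(1,2,3)] using M by blast
        qed
      qed
      then have "insert z X = X" using b unfolding base_SH_def by blast
      then show False using zX by auto
    qed
    moreover have "finite (X \<inter> N)" using assms(3,4) finite_subset by blast
    ultimately have "card (X \<inter> N) \<noteq> 0" by simp
    then show "card (X \<inter> N) = 1" using le N by fastforce
  qed
next
  assume H: "\<forall>N\<in>indisc C ` E. card (X \<inter> N) = 1"
  have ind: "indep_SH E C X" using indep_card[OF assms(1-3,4)] H by simp
  show "base_SH E C X" unfolding base_SH_def
  proof (intro conjI ind allI impI)
    fix Y assume Y: "indep_SH E C Y \<and> X \<subseteq> Y"
    have YE: "Y \<subseteq> E" using Y unfolding indep_SH_def by simp
    have "Y \<subseteq> X"
    proof
      fix y assume y: "y \<in> Y"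
      have yE: "y \<in> E" using y YE by auto
      let ?N = "indisc C y"
      have N: "?N \<in> indisc C ` E" using yE by blast
      obtain x where x: "X \<inter> ?N = {x}" using H N card_1_singletonE by metis
      have "x \<in> Y \<inter> ?N" "y \<in> Y \<inter> ?N" using x Y y self_in[OF assms(1) yE] by auto
      then have "x = y" using Y N unfolding indep_iff2[OF assms(1,2) YE] by blast
      then show "y \<in> X" using x by auto
    qed
    then show "Y = X" using Y by auto
  qed
qed

lemma base_count: assumes "covering E C" "partition_hyp E C" "finite E"
  shows "card {X. base_SH E C X} = (\<Prod>N\<in>indisc C ` E. card N)"
proof -
  let ?B = "indisc C ` E"
  have Bsub: "N \<subseteq> E" if "N \<in> ?B" for N using that ind_sub[OF assms(1)] by auto
  have bas: "base_SH E C X \<longleftrightarrow> X \<subseteq> E \<and> (\<forall>N\<in>?B. card (X \<inter> N) = 1)" for X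
  proof
    assume "base_SH E C X"
    moreover then have "X \<subseteq> E" unfolding base_SH_def indep_SH_def by simp
    ultimately show "X \<subseteq> E \<and> (\<forall>N\<in>?B. card (X \<inter> N) = 1)" using base_char[OF assms(1,2) _ assms(3)] by simp
  next
    assume "X \<subseteq> E \<and> (\<forall>N\<in>?B. card (X \<inter> N) = 1)"
    then show "base_SH E C X" using base_char[OF assms(1,2) _ assms(3)] by simp
  qed
  have key: "f ` ?B \<inter> N = {f N}" if f: "f \<in> PiE ?B (\<lambda>N. N)" and N: "N \<in> ?B" for f N
  proof -
    have "f M \<in> N \<Longrightarrow> M \<in> ?B \<Longrightarrow> M = N" for M
      proof -
      assume a: "f M \<in> N" "M \<in> ?B"
      have "f M \<in> M" using f a(2) using PiE_mem by fastforce
      then show "M = N" using blocks_disj[OF assms(2) a(2) N] a(1) by blast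
    qed
    note ev = this
    have fN: "f N \<in> N" using f N using PiE_mem by fastforce
    show ?thesis
    proof
      show "f ` ?B \<inter> N \<subseteq> {f N}"
      proof
        fix y assume "y \<in> f ` ?B \<inter> N"
        then obtain M where M: "M \<in> ?B" "y = f M" "f M \<in> N" by blast
        then have "M = N" using ev by blast
        then show "y \<in> {f N}" using M by simp
      qed
      show "{f N} \<subseteq> f ` ?B \<inter> N" using fN N by blast
    qed
  qed
  have "bij_betw (\<lambda>f. f ` ?B) (PiE ?B (\<lambda>N. N)) {X. base_SH E C X}"
  proof (rule bij_betwI')
    fix f g assume f: "f \<in> PiE ?B (\<lambda>N. N)" and g: "g \<in> PiE ?B (\<lambda>N. N)"
    show "(f ` ?B = g ` ?B) = (f = g)"
    proof
      assume e: "f ` ?B = g ` ?B"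
      show "f = g"
      proof (rule PiE_ext[OF f g])
        fix N assume N: "N \<in> ?B"
        have "{f N} = {g N}" using key[OF f N] key[OF g N] e by simp
        then show "f N = g N" by simp
      qed
    qed simp
  next
    fix f assume f: "f \<in> PiE ?B (\<lambda>N. N)"
    have "f ` ?B \<subseteq> E"
    proof
      fix y assume "y \<in> f ` ?B"
      then obtain N where N: "N \<in> ?B" "y = f N" by blast
      have "f N \<in> N" using PiE_mem[OF f N(1)] .
      then show "y \<in> E" using Bsub[OF N(1)] N(2) by blast
    qed
    then show "f ` ?B \<in> {X. base_SH E C X}" using key[OF f] bas by simp
  next
    fix X assume "X \<in> {X. base_SH E C X}"
    then have XE: "X \<subseteq> E" and c: "\<forall>N\<in>?B. card (X \<inter> N) = 1" using bas by auto
    define f where "f = (\<lambda>N. if N \<in> ?B then (THE x. X \<inter> N = {x}) else undefined)"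
    have fN: "X \<inter> N = {f N}" if "N \<in> ?B" for N
    proof -
      have "card (X \<inter> N) = 1" using c that by blast
      then obtain x where x: "X \<inter> N = {x}" by (rule card_1_singletonE)
      have "(THE y. X \<inter> N = {y}) = x" by (rule the_equality) (use x in auto)
      then show ?thesis unfolding f_def using that x by simp
    qed
    have fP: "f \<in> PiE ?B (\<lambda>N. N)"
    proof (rule PiE_I)
      fix N assume "N \<in> ?B" then show "f N \<in> N" using fN by blast
    next
      fix N assume "N \<notin> ?B" then show "f N = undefined" by (simp add: f_def)
    qed
    have "f ` ?B = X"
    proof
      show "f ` ?B \<subseteq> X" using fN by blast
      show "X \<subseteq> f ` ?B"
      proof
        fix x assume x: "x \<in> X"
        then have xE: "x \<in> E" using XE by auto
        have "x \<in> X \<inter> indisc C x" using x self_in[OF assms(1) xE] by auto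
        then have "x = f (indisc C x)" using fN[of "indisc C x"] xE by auto
        then show "x \<in> f ` ?B" using xE by blast
      qed
    qed
    then show "\<exists>f\<in>PiE ?B (\<lambda>N. N). X = f ` ?B" using fP by blast
  qed
  then have "card {X. base_SH E C X} = card (PiE ?B (\<lambda>N. N))" by (simp add: bij_betw_same_card)
  also have "\<dots> = (\<Prod>N\<in>?B. card N)" using assms(3) by (simp add: card_PiE)
  finally show ?thesis .
qed

lemma rank_char: assumes "covering E C" "partition_hyp E C" "X \<subseteq> E" "finite E"
  shows "rank_SH E C X = card {N\<in>indisc C ` E. N \<inter> X \<noteq> {}}"
proof -
  let ?T = "{N\<in>indisc C ` E. N \<inter> X \<noteq> {}}"
  let ?S = "{card Y | Y. Y \<subseteq> X \<and> indep_SH E C Y}"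
  have fT: "finite ?T" using assms(4) by simp
  have fX: "finite X" using assms(3,4) finite_subset by blast
  have fS: "finite ?S" using fX by simp
  have ub: "card Y \<le> card ?T" if Y: "Y \<subseteq> X" "indep_SH E C Y" for Y
  proof (rule card_inj_on_le[where f = "indisc C"])
    have YE: "Y \<subseteq> E" using Y(1) assms(3) by (rule order_trans)
    have H: "\<forall>x\<in>Y. \<forall>y\<in>Y. indisc C x = indisc C y \<longrightarrow> x = y"
      using Y(2) indep_iff[OF assms(1,2) YE] by simp
    show "inj_on (indisc C) Y" unfolding inj_on_def using H by simp
    show "indisc C ` Y \<subseteq> ?T"
    proof
      fix z assume "z \<in> indisc C ` Y"
      then obtain y where y: "y \<in> Y" "z = indisc C y" by blast
      have yE: "y \<in> E" using y(1) YE by blast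
      have "y \<in> indisc C y" using self_in[OF assms(1) yE] .
      moreover have "y \<in> X" using y(1) Y(1) by blast
      ultimately have "indisc C y \<inter> X \<noteq> {}" by blast
      then show "z \<in> ?T" using y yE by simp
    qed
  qed (rule fT)
  define sel where "sel = (\<lambda>N::'a set. SOME y. y \<in> N \<inter> X)"
  have selP: "sel N \<in> N \<inter> X" if "N \<in> ?T" for N
  proof -
    have "\<exists>y. y \<in> N \<inter> X" using that by blast
    then show ?thesis unfolding sel_def by (rule someI_ex)
  qed
  let ?Y = "sel ` ?T"
  have YX: "?Y \<subseteq> X" using selP by blast
  have YE: "?Y \<subseteq> E" using YX assms(3) by (rule order_trans)
  have same: "N1 = N2" if "N1 \<in> ?T" "N2 \<in> ?T" "x \<in> N1" "x \<in> N2" for N1 N2 x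
  proof -
    have "N1 \<in> indisc C ` E" "N2 \<in> indisc C ` E" using that(1,2) by simp_all
    then have "N1 = N2 \<or> N1 \<inter> N2 = {}" by (rule blocks_disj[OF assms(2)])
    then show ?thesis using that(3,4) by blast
  qed
  have indY: "indep_SH E C ?Y" unfolding indep_iff2[OF assms(1,2) YE]
  proof (intro ballI)
    fix M x y assume M: "M \<in> indisc C ` E" and x: "x \<in> ?Y \<inter> M" and y: "y \<in> ?Y \<inter> M"
    obtain N1 where N1: "N1 \<in> ?T" "x = sel N1" using x by blast
    obtain N2 where N2: "N2 \<in> ?T" "y = sel N2" using y by blast
    have xX: "x \<in> X" using x YX by blast
    have "M \<inter> X \<noteq> {}" using x xX by blast
    then have MT: "M \<in> ?T" using M by simp
    have "x \<in> N1" using selP[OF N1(1)] N1(2) by simp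
    then have "N1 = M" using same[OF N1(1) MT] x by blast
    moreover have "y \<in> N2" using selP[OF N2(1)] N2(2) by simp
    then have "N2 = M" using same[OF N2(1) MT] y by blast
    ultimately show "x = y" using N1(2) N2(2) by simp
  qed
  have inj: "inj_on sel ?T"
  proof (rule inj_onI)
    fix N1 N2 assume a: "N1 \<in> ?T" "N2 \<in> ?T" "sel N1 = sel N2"
    have "sel N1 \<in> N1" using selP[OF a(1)] by blast
    moreover have "sel N1 \<in> N2" using selP[OF a(2)] a(3) by simp
    ultimately show "N1 = N2" using same[OF a(1,2)] by blast
  qed
  have cY: "card ?Y = card ?T" using inj by (rule card_image)
  have mem: "card ?T \<in> ?S"
  proof -
    have "card ?Y \<in> ?S" using YX indY by blast
    then show ?thesis using cY by simp
  qed
  have "Max ?S = card ?T"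
  proof (rule Max_eqI[OF fS])
    fix y assume "y \<in> ?S"
    then obtain Y where "y = card Y" "Y \<subseteq> X" "indep_SH E C Y" by blast
    then show "y \<le> card ?T" using ub by simp
  next
    show "card ?T \<in> ?S" by (rule mem)
  qed
  then show ?thesis unfolding rank_SH_def by simp
qed

lemma dep_char: assumes "covering E C" "partition_hyp E C" "X \<subseteq> E" "finite E"
  shows "dep_SH E C X \<longleftrightarrow> (\<exists>N\<in>indisc C ` E. card (N \<inter> X) > 1)"
  unfolding dep_SH_def indep_card[OF assms] using assms(3) by (auto simp: Int_commute not_le)

lemma circuit_char: assumes "covering E C" "partition_hyp E C" "X \<subseteq> E" "finite E"
  shows "circuit_SH E C X \<longleftrightarrow> (\<exists>N\<in>indisc C ` E. X \<subseteq> N \<and> card X = 2)"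
proof
  assume c: "circuit_SH E C X"
  then obtain N where N: "N \<in> indisc C ` E" "card (N \<inter> X) > 1"
    using dep_char[OF assms] unfolding circuit_SH_def by blast
  have finNX: "finite (N \<inter> X)" using assms(3,4) finite_subset by blast
  have "\<not> card (N \<inter> X) \<le> Suc 0" using N(2) by simp
  then obtain a b where ab: "a \<in> N \<inter> X" "b \<in> N \<inter> X" "a \<noteq> b"
    unfolding card_le_Suc0_iff_eq[OF finNX] by blast
  have abE: "{a,b} \<subseteq> E" using ab assms(3) by auto
  have fin: "finite (N \<inter> {a,b})" by simp
  have "card (N \<inter> {a,b}) > 1" using ab by auto
  then have "dep_SH E C {a,b}" using dep_char[OF assms(1,2) abE assms(4)] N(1) by (metis Int_commute)
  then have "\<not> {a,b} \<subset> X" using c unfolding circuit_SH_def by blast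
  then have "X = {a,b}" using ab by auto
  then show "\<exists>N\<in>indisc C ` E. X \<subseteq> N \<and> card X = 2" using ab N(1) by auto
next
  assume "\<exists>N\<in>indisc C ` E. X \<subseteq> N \<and> card X = 2"
  then obtain N where N: "N \<in> indisc C ` E" "X \<subseteq> N" "card X = 2" by blast
  have "N \<inter> X = X" using N(2) by blast
  then have "card (N \<inter> X) > 1" using N(3) by simp
  then have "dep_SH E C X" using dep_char[OF assms] N(1) by blast
  moreover have "\<not> dep_SH E C Y" if Y: "Y \<subset> X" for Y
  proof -
    have fX: "finite X" using N(3) card_ge_0_finite by force
    have "card Y < 2" using psubset_card_mono[OF fX Y] N(3) by simp
    moreover have "card (M \<inter> Y) \<le> card Y" for M using fX Y
      by (meson card_mono finite_subset inf_le2 psubset_imp_subset)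
    ultimately have "\<forall>M. \<not> card (M \<inter> Y) > 1"
      by (metis Suc_1 leD less_Suc_eq_le order.strict_trans1)
    then show ?thesis using dep_char[OF assms(1,2) _ assms(4), of Y] Y assms(3) unfolding dep_SH_def by blast
  qed
  ultimately show "circuit_SH E C X" unfolding circuit_SH_def by blast
qed

theorem proposition12:
  fixes E :: "'a set" and C :: "'a set set"
  assumes "finite E" and "covering E C" and "partition_hyp E C"
  shows "(\<forall>X. X \<subseteq> E \<longrightarrow>
            (base_SH E C X \<longleftrightarrow> (\<forall>N\<in>indisc C ` E. card (X \<inter> N) = 1)))
       \<and> card {X. base_SH E C X} = (\<Prod>N\<in>indisc C ` E. card N)
       \<and> (\<forall>X. X \<subseteq> E \<longrightarrow>
            rank_SH E C X = card {N\<in>indisc C ` E. N \<inter> X \<noteq> {}})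
       \<and> (\<forall>X. X \<subseteq> E \<longrightarrow>
            (dep_SH E C X \<longleftrightarrow> (\<exists>N\<in>indisc C ` E. card (N \<inter> X) > 1)))
       \<and> (\<forall>X. X \<subseteq> E \<longrightarrow>
            (circuit_SH E C X \<longleftrightarrow> (\<exists>N\<in>indisc C ` E. X \<subseteq> N \<and> card X = 2)))"
  using base_char[OF assms(2,3) _ assms(1)] base_count[OF assms(2,3,1)]
    rank_char[OF assms(2,3) _ assms(1)] dep_char[OF assms(2,3) _ assms(1)]
    circuit_char[OF assms(2,3) _ assms(1)] by blast

end
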